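(* Let $\mathbf{A}$ be a countable UL-chain and let $\mathscr{K}_3$ be the class of all finite $\mathbf{A}$-structures $\langle\mathbf{A},\mathbf{M}\rangle$ in the language with a single binary relation symbol $<$ such that for all $a,b,c\in M$: (3.1) $\|a<a\|^{\mathbf{A}}_{\mathbf{M}}\ge\bar 1$; (3.2) if $\|a<b\|^{\mathbf{A}}_{\mathbf{M}}\ge\bar 1$ and $\|b<c\|^{\mathbf{A}}_{\mathbf{M}}\ge\bar 1$ then $\|a<c\|^{\mathbf{A}}_{\mathbf{M}}\ge\bar 1$; (3.3) if $\|a<b\|^{\mathbf{A}}_{\mathbf{M}}\ge\bar 1$ and $\|b<a\|^{\mathbf{A}}_{\mathbf{M}}\ge\bar 1$ then $a=b$. Then $\mathscr{K}_3^{\cong}$ is a Fraïssé class, i.e. a countable set of finitely generated $\mathbf{A}$-structures having the hereditary property, the joint embedding property and the amalgamation property.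
   Context: A UL-algebra is $\mathbf{A}=\langle A,\wedge,\vee,\&,\to,\bar 0,\bar 1,\bot,\top\rangle$ where $\langle A,\wedge,\vee,\bot,\top\rangle$ is a bounded lattice, $\langle A,\&,\bar 1\rangle$ is a commutative monoid, $a\& b\le c$ iff $b\le a\to c$, and $((a\to b)\wedge\bar 1)\vee((b\to a)\wedge \bar 1)=\bar 1$; a UL-chain is one with linear order. An $\mathbf{A}$-structure for $\{<\}$ is a set $M$ with a function $<_{\mathbf{M}}:M^2\to A$, $\|a<b\|^{\mathbf{A}}_{\mathbf{M}}=<_{\mathbf{M}}(a,b)$. Substructure: subset with restricted relation. Embedding: injective map preserving the values of $<$, identity on $\mathbf{A}$; isomorphism: surjective embedding. $\mathscr{K}^{\cong}$: one representative of each isomorphism type in $\mathscr{K}$. Hereditary property: closed under substructures (up to isomorphism). Joint embedding property: any two members embed into a common member. Amalgamation property: whenever $\mathbf{M}_0$ is a substructure of both $\mathbf{M}_1$ and $\mathbf{M}_2$, all in the class, there are a member $\mathbf{M}_3$ and embeddings $f_1:\mathbf{M}_1\to\mathbf{M}_3$, $f_2:\mathbf{M}_2\to\mathbf{M}_3$ agreeing on $M_0$. *)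

theory Defs
  imports Main "HOL-Library.Countable_Set"
begin

record 'a ul_alg =
  carrier :: "'a set"
  meet :: "'a \<Rightarrow> 'a \<Rightarrow> 'a"
  join :: "'a \<Rightarrow> 'a \<Rightarrow> 'a"
  mult :: "'a \<Rightarrow> 'a \<Rightarrow> 'a"
  imp  :: "'a \<Rightarrow> 'a \<Rightarrow> 'a"
  zero :: 'a
  one  :: 'a
  bot  :: 'a
  top  :: 'a

definition ul_le :: "'a ul_alg \<Rightarrow> 'a \<Rightarrow> 'a \<Rightarrow> bool" where
  "ul_le A x y \<longleftrightarrow> meet A x y = x"

definition ul_algebra :: "'a ul_alg \<Rightarrow> bool" where
  "ul_algebra A \<longleftrightarrow>
    \<comment> \<open>closure\<close>
    (\<forall>x\<in>carrier A. \<forall>y\<in>carrier A.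
        meet A x y \<in> carrier A \<and> join A x y \<in> carrier A \<and>
        mult A x y \<in> carrier A \<and> imp A x y \<in> carrier A) \<and>
    zero A \<in> carrier A \<and> one A \<in> carrier A \<and> bot A \<in> carrier A \<and> top A \<in> carrier A \<and>
    \<comment> \<open>bounded lattice\<close>
    (\<forall>x\<in>carrier A. \<forall>y\<in>carrier A. \<forall>z\<in>carrier A.
        meet A (meet A x y) z = meet A x (meet A y z) \<and>
        join A (join A x y) z = join A x (join A y z)) \<and>
    (\<forall>x\<in>carrier A. \<forall>y\<in>carrier A.
        meet A x y = meet A y x \<and> join A x y = join A y x \<and>
        meet A x (join A x y) = x \<and> join A x (meet A x y) = x) \<and>
    (\<forall>x\<in>carrier A. ul_le A (bot A) x \<and> ul_le A x (top A)) \<and>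
    \<comment> \<open>commutative monoid\<close>
    (\<forall>x\<in>carrier A. \<forall>y\<in>carrier A. \<forall>z\<in>carrier A.
        mult A (mult A x y) z = mult A x (mult A y z)) \<and>
    (\<forall>x\<in>carrier A. \<forall>y\<in>carrier A. mult A x y = mult A y x) \<and>
    (\<forall>x\<in>carrier A. mult A (one A) x = x) \<and>
    \<comment> \<open>residuation\<close>
    (\<forall>a\<in>carrier A. \<forall>b\<in>carrier A. \<forall>c\<in>carrier A.
        ul_le A (mult A a b) c \<longleftrightarrow> ul_le A b (imp A a c)) \<and>
    \<comment> \<open>prelinearity\<close>
    (\<forall>a\<in>carrier A. \<forall>b\<in>carrier A.
        join A (meet A (imp A a b) (one A)) (meet A (imp A b a) (one A)) = one A)"

definition ul_chain :: "'a ul_alg \<Rightarrow> bool" where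
  "ul_chain A \<longleftrightarrow> ul_algebra A \<and>
     (\<forall>x\<in>carrier A. \<forall>y\<in>carrier A. ul_le A x y \<or> ul_le A y x)"

text \<open>An A-structure is a pair (M, R) of a domain M and the valuation
  R a b = ||a < b|| of the binary symbol. Domains are subsets of nat
  (every finite / countable structure is isomorphic to one of this form).\<close>

type_synonym 'a strc = "nat set \<times> (nat \<Rightarrow> nat \<Rightarrow> 'a)"

definition a_structure :: "'a ul_alg \<Rightarrow> 'a strc \<Rightarrow> bool" where
  "a_structure A S \<longleftrightarrow> (\<forall>a\<in>fst S. \<forall>b\<in>fst S. snd S a b \<in> carrier A)"

definition substructure :: "'a strc \<Rightarrow> 'a strc \<Rightarrow> bool" where
  "substructure N M \<longleftrightarrow> fst N \<subseteq> fst M \<and>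
     (\<forall>a\<in>fst N. \<forall>b\<in>fst N. snd N a b = snd M a b)"

definition embedding :: "(nat \<Rightarrow> nat) \<Rightarrow> 'a strc \<Rightarrow> 'a strc \<Rightarrow> bool" where
  "embedding f M N \<longleftrightarrow> inj_on f (fst M) \<and> f ` fst M \<subseteq> fst N \<and>
     (\<forall>a\<in>fst M. \<forall>b\<in>fst M. snd N (f a) (f b) = snd M a b)"

definition isomorphism :: "(nat \<Rightarrow> nat) \<Rightarrow> 'a strc \<Rightarrow> 'a strc \<Rightarrow> bool" where
  "isomorphism f M N \<longleftrightarrow> embedding f M N \<and> f ` fst M = fst N"

definition isomorphic :: "'a strc \<Rightarrow> 'a strc \<Rightarrow> bool" where
  "isomorphic M N \<longleftrightarrow> (\<exists>f. isomorphism f M N)"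

definition K3 :: "'a ul_alg \<Rightarrow> 'a strc set" where
  "K3 A = {S. a_structure A S \<and> finite (fst S) \<and>
     (\<forall>a\<in>fst S. ul_le A (one A) (snd S a a)) \<and>
     (\<forall>a\<in>fst S. \<forall>b\<in>fst S. \<forall>c\<in>fst S.
        ul_le A (one A) (snd S a b) \<longrightarrow> ul_le A (one A) (snd S b c) \<longrightarrow>
        ul_le A (one A) (snd S a c)) \<and>
     (\<forall>a\<in>fst S. \<forall>b\<in>fst S.
        ul_le A (one A) (snd S a b) \<longrightarrow> ul_le A (one A) (snd S b a) \<longrightarrow> a = b)}"

definition iso_representatives :: "'a strc set \<Rightarrow> 'a strc set \<Rightarrow> bool" where
  "iso_representatives K R \<longleftrightarrow> R \<subseteq> K \<and>
     (\<forall>M\<in>K. \<exists>N\<in>R. isomorphic M N) \<and>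
     (\<forall>N1\<in>R. \<forall>N2\<in>R. isomorphic N1 N2 \<longrightarrow> N1 = N2)"

definition hereditary :: "'a strc set \<Rightarrow> bool" where
  "hereditary K \<longleftrightarrow> (\<forall>M\<in>K. \<forall>N. substructure N M \<longrightarrow> (\<exists>N'\<in>K. isomorphic N N'))"

definition joint_embedding :: "'a strc set \<Rightarrow> bool" where
  "joint_embedding K \<longleftrightarrow> (\<forall>M1\<in>K. \<forall>M2\<in>K. \<exists>M3\<in>K. \<exists>f1 f2.
     embedding f1 M1 M3 \<and> embedding f2 M2 M3)"

definition amalgamation :: "'a strc set \<Rightarrow> bool" where
  "amalgamation K \<longleftrightarrow> (\<forall>M0\<in>K. \<forall>M1\<in>K. \<forall>M2\<in>K. \<forall>e1 e2.
     embedding e1 M0 M1 \<longrightarrow> embedding e2 M0 M2 \<longrightarrow>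
     (\<exists>M3\<in>K. \<exists>f1 f2. embedding f1 M1 M3 \<and> embedding f2 M2 M3 \<and>
        (\<forall>a\<in>fst M0. f1 (e1 a) = f2 (e2 a))))"

text \<open>No function symbols: finitely generated = finite domain.\<close>
definition fraisse_class :: "'a ul_alg \<Rightarrow> 'a strc set \<Rightarrow> bool" where
  "fraisse_class A K \<longleftrightarrow> countable K \<and>
     (\<forall>M\<in>K. a_structure A M \<and> finite (fst M)) \<and>
     hereditary K \<and> joint_embedding K \<and> amalgamation K"

end

theory Submission
  imports Defs
begin

lemma poset_amalg:
  fixes S T :: "nat set" and p q :: "nat \<Rightarrow> nat \<Rightarrow> bool"
  assumes pt: "\<And>x y z. x\<in>S \<Longrightarrow> y\<in>S \<Longrightarrow> z\<in>S \<Longrightarrow> p x y \<Longrightarrow> p y z \<Longrightarrow> p x z"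
    and pa: "\<And>x y. x\<in>S \<Longrightarrow> y\<in>S \<Longrightarrow> p x y \<Longrightarrow> p y x \<Longrightarrow> x = y"
    and qt: "\<And>x y z. x\<in>T \<Longrightarrow> y\<in>T \<Longrightarrow> z\<in>T \<Longrightarrow> q x y \<Longrightarrow> q y z \<Longrightarrow> q x z"
    and qa: "\<And>x y. x\<in>T \<Longrightarrow> y\<in>T \<Longrightarrow> q x y \<Longrightarrow> q y x \<Longrightarrow> x = y"
    and pq: "\<And>x y. x\<in>S\<inter>T \<Longrightarrow> y\<in>S\<inter>T \<Longrightarrow> p x y = q x y"
    and r_def: "\<And>x y. r x y = ((x\<in>S \<and> y\<in>S \<and> p x y) \<or> (x\<in>T \<and> y\<in>T \<and> q x y) \<or>
        (x\<in>S \<and> y\<in>T \<and> (\<exists>c\<in>S\<inter>T. p x c \<and> q c y)) \<or> (x\<in>T \<and> y\<in>S \<and> (\<exists>c\<in>S\<inter>T. q x c \<and> p c y)))"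
  shows "\<And>x y. x\<in>S \<Longrightarrow> y\<in>S \<Longrightarrow> r x y = p x y"
    and "\<And>x y. x\<in>T \<Longrightarrow> y\<in>T \<Longrightarrow> r x y = q x y"
    and "\<And>x y z. x\<in>S\<union>T \<Longrightarrow> y\<in>S\<union>T \<Longrightarrow> z\<in>S\<union>T \<Longrightarrow> r x y \<Longrightarrow> r y z \<Longrightarrow> r x z"
    and "\<And>x y. x\<in>S\<union>T \<Longrightarrow> y\<in>S\<union>T \<Longrightarrow> r x y \<Longrightarrow> r y x \<Longrightarrow> x = y"
proof -
  have rS: "r x y = p x y" if "x\<in>S" "y\<in>S" for x y
  proof
    assume "r x y" then show "p x y" unfolding r_def
    proof (elim disjE conjE bexE)
      assume "x \<in> T" "y \<in> T" "q x y" then show ?thesis using pq that by blast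
    next
      fix c assume "c\<in>S\<inter>T" "p x c" "q c y" "y\<in>T"
      then show ?thesis using pq[of c y] pt[of x c y] that by blast
    next
      fix c assume "c\<in>S\<inter>T" "q x c" "p c y" "x\<in>T"
      then show ?thesis using pq[of x c] pt[of x c y] that by blast
    qed
  next
    assume "p x y" then show "r x y" unfolding r_def using that by blast
  qed
  have rT: "r x y = q x y" if "x\<in>T" "y\<in>T" for x y
  proof
    assume "r x y" then show "q x y" unfolding r_def
    proof (elim disjE conjE bexE)
      assume "x \<in> S" "y \<in> S" "p x y" then show ?thesis using pq that by blast
    next
      fix c assume "c\<in>S\<inter>T" "p x c" "q c y" "x\<in>S"
      then show ?thesis using pq[of x c] qt[of x c y] that by blast
    next
      fix c assume "c\<in>S\<inter>T" "q x c" "p c y" "y\<in>S"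
      then show ?thesis using pq[of c y] qt[of x c y] that by blast
    qed
  next
    assume "q x y" then show "r x y" unfolding r_def using that by blast
  qed
  show "\<And>x y. x\<in>S \<Longrightarrow> y\<in>S \<Longrightarrow> r x y = p x y" by (rule rS)
  show "\<And>x y. x\<in>T \<Longrightarrow> y\<in>T \<Longrightarrow> r x y = q x y" by (rule rT)
  show "x = y" if H: "x\<in>S\<union>T" "y\<in>S\<union>T" "r x y" "r y x" for x y
  proof -
    consider "x\<in>S" "y\<in>S" | "x\<in>T" "y\<in>T" | "x\<in>S" "x\<notin>T" "y\<in>T" "y\<notin>S" | "x\<in>T" "x\<notin>S" "y\<in>S" "y\<notin>T"
      using H(1,2) by blast
    then show ?thesis
    proof cases
      case 1 then show ?thesis using rS pa H by metis
    next
      case 2 then show ?thesis using rT qa H by metis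
    next
      case 3
      from H(3) 3 obtain c where c: "c\<in>S\<inter>T" "p x c" "q c y" unfolding r_def by blast
      from H(4) 3 obtain d where d: "d\<in>S\<inter>T" "q y d" "p d x" unfolding r_def by blast
      have "q c d" using qt c d 3 by blast
      hence "p c d" using pq c d by blast
      have "p d c" using pt c d 3 by blast
      have "c = d" using pa \<open>p c d\<close> \<open>p d c\<close> c d by blast
      hence "x = c" using pa c d 3 by blast
      then show ?thesis using c 3 by blast
    next
      case 4
      from H(3) 4 obtain c where c: "c\<in>S\<inter>T" "q x c" "p c y" unfolding r_def by blast
      from H(4) 4 obtain d where d: "d\<in>S\<inter>T" "p y d" "q d x" unfolding r_def by blast
      have "p c d" using pt c d 4 by blast
      hence "q c d" using pq c d by blast
      have "q d c" using qt c d 4 by blast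
      have "c = d" using qa \<open>q c d\<close> \<open>q d c\<close> c d by blast
      hence "x = c" using qa c d 4 by blast
      then show ?thesis using c 4 by blast
    qed
  qed
  show "r x z" if "x\<in>S\<union>T" "y\<in>S\<union>T" "z\<in>S\<union>T" "r x y" "r y z" for x y z
  proof -
    have pq': "p a b" "q a b" if "a\<in>S\<inter>T" "b\<in>S\<inter>T" "p a b \<or> q a b" for a b using pq that by blast+
    show ?thesis
      using that unfolding r_def
      apply (elim disjE conjE bexE)
      by (smt (verit) IntE IntI pt qt pq)+
  qed
qed
lemma ul_le_one_one: assumes "ul_algebra A" shows "ul_le A (one A) (one A)"
proof -
  let ?x = "one A"
  have c: "?x \<in> carrier A" "meet A ?x ?x \<in> carrier A" using assms unfolding ul_algebra_def by auto
  have "join A ?x (meet A ?x ?x) = ?x" using assms c unfolding ul_algebra_def by blast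
  moreover have "meet A ?x (join A ?x (meet A ?x ?x)) = ?x" using assms c unfolding ul_algebra_def by blast
  ultimately show ?thesis unfolding ul_le_def by simp
qed

lemma trivial_alg:
  assumes A: "ul_algebra A" and all: "\<forall>x\<in>carrier A. ul_le A (one A) x" and x: "x \<in> carrier A"
  shows "x = bot A"
proof -
  have c: "one A \<in> carrier A" "bot A \<in> carrier A" using A unfolding ul_algebra_def by auto
  have "ul_le A (one A) (bot A)" using all c by blast
  moreover have "ul_le A (bot A) (one A)" using A c unfolding ul_algebra_def by blast
  moreover have "meet A (one A) (bot A) = meet A (bot A) (one A)" using A c unfolding ul_algebra_def by blast
  ultimately have ob: "one A = bot A" unfolding ul_le_def by simp
  have u1: "\<forall>x\<in>carrier A. mult A (one A) x = x" using A unfolding ul_algebra_def by blast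
  have cm: "\<forall>x\<in>carrier A. \<forall>y\<in>carrier A. mult A x y = mult A y x" using A unfolding ul_algebra_def by blast
  have "x = mult A (one A) x" using u1 x by simp
  also have "\<dots> = mult A (bot A) x" using ob by simp
  also have "\<dots> = mult A x (bot A)" using cm x c by simp
  finally have xe: "x = mult A x (bot A)" .
  have "imp A x (bot A) \<in> carrier A" using A x c unfolding ul_algebra_def by blast
  hence "ul_le A (bot A) (imp A x (bot A))" using A unfolding ul_algebra_def by blast
  hence "ul_le A (mult A x (bot A)) (bot A)" using A x c unfolding ul_algebra_def by blast
  hence "ul_le A x (bot A)" using xe by simp
  moreover have "ul_le A (bot A) x" using A x unfolding ul_algebra_def by blast
  moreover have "meet A x (bot A) = meet A (bot A) x" using A c x unfolding ul_algebra_def by blast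
  ultimately show ?thesis unfolding ul_le_def by simp
qed

lemma embedding_comp: "embedding f M N \<Longrightarrow> embedding g N P \<Longrightarrow> embedding (g \<circ> f) M P"
  unfolding embedding_def by (auto simp: comp_inj_on image_subset_iff inj_on_def)

lemma amalg_K3:
  assumes A: "ul_algebra A"
    and M0: "M0 \<in> K3 A" and M1: "M1 \<in> K3 A" and M2: "M2 \<in> K3 A"
    and e1: "embedding e1 M0 M1" and e2: "embedding e2 M0 M2"
  shows "\<exists>M3\<in>K3 A. \<exists>f1 f2. embedding f1 M1 M3 \<and> embedding f2 M2 M3 \<and>
        (\<forall>a\<in>fst M0. f1 (e1 a) = f2 (e2 a))"
proof (cases "\<forall>x\<in>carrier A. ul_le A (one A) x")
  case True
  have triv: "x = bot A" if "x \<in> carrier A" for x using trivial_alg[OF A True that] .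
  have bc: "bot A \<in> carrier A" using A unfolding ul_algebra_def by auto
  define M3 :: "'a strc" where "M3 = ({0}, \<lambda>_ _. bot A)"
  have K: "M3 \<in> K3 A" unfolding M3_def K3_def a_structure_def using bc True by auto
  have emb: "embedding (\<lambda>_. 0) M M3" if "M \<in> K3 A" for M
  proof -
    have vals: "snd M a b = bot A" if "a \<in> fst M" "b \<in> fst M" for a b
      using \<open>M \<in> K3 A\<close> that triv unfolding K3_def a_structure_def by blast
    have "a = b" if "a \<in> fst M" "b \<in> fst M" for a b
    proof -
      have "snd M a b \<in> carrier A" "snd M b a \<in> carrier A"
        using \<open>M \<in> K3 A\<close> that unfolding K3_def a_structure_def by auto
      hence "ul_le A (one A) (snd M a b)" "ul_le A (one A) (snd M b a)" using True by auto
      thus ?thesis using \<open>M \<in> K3 A\<close> that unfolding K3_def by blast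
    qed
    then show ?thesis unfolding embedding_def M3_def using vals by (auto simp: inj_on_def)
  qed
  show ?thesis using K emb M1 M2 by blast
next
  case False
  then obtain w0 where w0: "w0 \<in> carrier A" "\<not> ul_le A (one A) w0" by blast
  have oc: "one A \<in> carrier A" using A unfolding ul_algebra_def by auto
  have oo: "ul_le A (one A) (one A)" using ul_le_one_one[OF A] .
  have fin1: "finite (fst M1)" and fin2: "finite (fst M2)" using M1 M2 unfolding K3_def by auto
  define N where "N = Suc (Max (insert 0 (fst M1)))"
  have ltN: "x < N" if "x \<in> fst M1" for x
    using that fin1 unfolding N_def by (simp add: le_imp_less_Suc)
  define E where "E = e2 ` fst M0"
  define g where "g y = (if y \<in> E then e1 (inv_into (fst M0) e2 y) else y + N)" for y
  have inj0: "inj_on e2 (fst M0)" and inj1: "inj_on e1 (fst M0)"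
    using e1 e2 unfolding embedding_def by auto
  have sub1: "e1 ` fst M0 \<subseteq> fst M1" and sub2: "e2 ` fst M0 \<subseteq> fst M2"
    using e1 e2 unfolding embedding_def by auto
  have ge2: "g (e2 z) = e1 z" if "z \<in> fst M0" for z
    using that inj0 unfolding g_def E_def by auto
  have gS: "g y \<in> fst M1 \<longleftrightarrow> y \<in> E" if "y \<in> fst M2" for y
  proof
    assume "g y \<in> fst M1"
    show "y \<in> E"
    proof (rule ccontr)
      assume "y \<notin> E" hence "g y = y + N" unfolding g_def by simp
      with ltN[OF \<open>g y \<in> fst M1\<close>] show False by simp
    qed
  next
    assume "y \<in> E" then obtain z where "z \<in> fst M0" "y = e2 z" unfolding E_def by blast
    then show "g y \<in> fst M1" using ge2 sub1 by auto
  qed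
  have injg: "inj_on g (fst M2)"
  proof (rule inj_onI)
    fix x y assume xy: "x \<in> fst M2" "y \<in> fst M2" "g x = g y"
    show "x = y"
    proof (cases "x \<in> E")
      case True
      then obtain z where z: "z \<in> fst M0" "x = e2 z" unfolding E_def by blast
      hence "g y \<in> fst M1" using xy ge2 sub1 by auto
      hence "y \<in> E" using gS xy by blast
      then obtain z' where z': "z' \<in> fst M0" "y = e2 z'" unfolding E_def by blast
      have "e1 z = e1 z'" using xy z z' ge2 by metis
      hence "z = z'" using inj1 z z' by (meson inj_onD)
      thus ?thesis using z z' by simp
    next
      case False
      hence "g x \<notin> fst M1" using gS xy by blast
      hence "y \<notin> E" using gS xy by metis
      thus ?thesis using False xy unfolding g_def by simp
    qed
  qed
  define S where "S = fst M1"
  define T where "T = g ` fst M2"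
  define h where "h = inv_into (fst M2) g"
  have hg: "h (g y) = y" if "y \<in> fst M2" for y unfolding h_def using injg that by simp
  have hT: "h u \<in> fst M2" "g (h u) = u" if "u \<in> T" for u
    using that unfolding T_def h_def by (auto simp: inv_into_into f_inv_into_f)
  have ST: "S \<inter> T = e1 ` fst M0"
  proof
    show "S \<inter> T \<subseteq> e1 ` fst M0"
    proof
      fix u assume u: "u \<in> S \<inter> T"
      then obtain y where y: "y \<in> fst M2" "u = g y" unfolding T_def by blast
      hence "y \<in> E" using gS u unfolding S_def by blast
      then obtain z where "z \<in> fst M0" "y = e2 z" unfolding E_def by blast
      thus "u \<in> e1 ` fst M0" using y ge2 by auto
    qed
  next
    show "e1 ` fst M0 \<subseteq> S \<inter> T"
    proof
      fix u assume "u \<in> e1 ` fst M0"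
      then obtain z where z: "z \<in> fst M0" "u = e1 z" by blast
      have "u = g (e2 z)" using ge2 z by simp
      moreover have "e2 z \<in> fst M2" using sub2 z by blast
      ultimately have "u \<in> T" unfolding T_def by blast
      moreover have "u \<in> S" using sub1 z unfolding S_def by blast
      ultimately show "u \<in> S \<inter> T" by blast
    qed
  qed
  have val0: "snd M2 (e2 z) (e2 z') = snd M1 (e1 z) (e1 z')" if "z \<in> fst M0" "z' \<in> fst M0" for z z'
    using e1 e2 that unfolding embedding_def by simp
  have he1: "h (e1 z) = e2 z" if "z \<in> fst M0" for z
  proof -
    have "e2 z \<in> fst M2" using sub2 that by blast
    hence "h (g (e2 z)) = e2 z" by (rule hg)
    thus ?thesis using ge2[OF that] by simp
  qed
  have valST: "snd M2 (h u) (h v) = snd M1 u v" if "u \<in> S \<inter> T" "v \<in> S \<inter> T" for u v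
  proof -
    have "u \<in> e1 ` fst M0" "v \<in> e1 ` fst M0" using that ST by simp_all
    then obtain z z' where z: "z \<in> fst M0" "u = e1 z" and z': "z' \<in> fst M0" "v = e1 z'" by (auto simp only: image_iff)
    have "snd M2 (h u) (h v) = snd M2 (e2 z) (e2 z')" using z z' he1 by simp
    also have "\<dots> = snd M1 (e1 z) (e1 z')" by (rule val0[OF z(1) z'(1)])
    finally show ?thesis using z z' by simp
  qed
  define p where "p u v = ul_le A (one A) (snd M1 u v)" for u v
  define q where "q u v = ul_le A (one A) (snd M2 (h u) (h v))" for u v
  define r where "r x y = ((x\<in>S \<and> y\<in>S \<and> p x y) \<or> (x\<in>T \<and> y\<in>T \<and> q x y) \<or>
        (x\<in>S \<and> y\<in>T \<and> (\<exists>c\<in>S\<inter>T. p x c \<and> q c y)) \<or> (x\<in>T \<and> y\<in>S \<and> (\<exists>c\<in>S\<inter>T. q x c \<and> p c y)))" for x y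
  have P1: "\<And>x y z. x\<in>S \<Longrightarrow> y\<in>S \<Longrightarrow> z\<in>S \<Longrightarrow> p x y \<Longrightarrow> p y z \<Longrightarrow> p x z"
    "\<And>x y. x\<in>S \<Longrightarrow> y\<in>S \<Longrightarrow> p x y \<Longrightarrow> p y x \<Longrightarrow> x = y"
    using M1 unfolding K3_def p_def S_def by blast+
  have P2: "\<And>x y z. x\<in>T \<Longrightarrow> y\<in>T \<Longrightarrow> z\<in>T \<Longrightarrow> q x y \<Longrightarrow> q y z \<Longrightarrow> q x z"
    using M2 hT unfolding K3_def q_def by blast
  have P3: "\<And>x y. x\<in>T \<Longrightarrow> y\<in>T \<Longrightarrow> q x y \<Longrightarrow> q y x \<Longrightarrow> x = y"
  proof -
    fix x y assume "x\<in>T" "y\<in>T" "q x y" "q y x"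
    hence "h x = h y" using M2 hT unfolding K3_def q_def by blast
    thus "x = y" using hT \<open>x\<in>T\<close> \<open>y\<in>T\<close> by metis
  qed
  have PQ: "\<And>x y. x\<in>S\<inter>T \<Longrightarrow> y\<in>S\<inter>T \<Longrightarrow> p x y = q x y" using valST unfolding p_def q_def by simp
  note am0 = poset_amalg[where S=S and T=T and p=p and q=q and r=r]
  have am: "\<And>x y. x\<in>S \<Longrightarrow> y\<in>S \<Longrightarrow> r x y = p x y"
    "\<And>x y. x\<in>T \<Longrightarrow> y\<in>T \<Longrightarrow> r x y = q x y"
    "\<And>x y z. x\<in>S\<union>T \<Longrightarrow> y\<in>S\<union>T \<Longrightarrow> z\<in>S\<union>T \<Longrightarrow> r x y \<Longrightarrow> r y z \<Longrightarrow> r x z"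
    "\<And>x y. x\<in>S\<union>T \<Longrightarrow> y\<in>S\<union>T \<Longrightarrow> r x y \<Longrightarrow> r y x \<Longrightarrow> x = y"
    apply -
    subgoal using P1(1) P1(2) P2 P3 PQ r_def by (rule am0(1))
    subgoal using P1(1) P1(2) P2 P3 PQ r_def by (rule am0(2))
    subgoal using P1(1) P1(2) P2 P3 PQ r_def by (rule am0(3))
    subgoal using P1(1) P1(2) P2 P3 PQ r_def by (rule am0(4))
    done
  define R3 where "R3 u v = (if u \<in> S \<and> v \<in> S then snd M1 u v else if u \<in> T \<and> v \<in> T then snd M2 (h u) (h v)
     else if r u v then one A else w0)" for u v
  define M3 :: "'a strc" where "M3 = (S \<union> T, R3)"
  have iff: "ul_le A (one A) (R3 u v) \<longleftrightarrow> r u v" if uv: "u \<in> S \<union> T" "v \<in> S \<union> T" for u v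
  proof (cases "u \<in> S \<and> v \<in> S")
    case True
    hence "R3 u v = snd M1 u v" unfolding R3_def by simp
    moreover have "r u v = p u v" using am(1) True by blast
    ultimately show ?thesis unfolding p_def by simp
  next
    case F1: False
    show ?thesis
    proof (cases "u \<in> T \<and> v \<in> T")
      case True
      hence "R3 u v = snd M2 (h u) (h v)" using F1 unfolding R3_def by auto
      moreover have "r u v = q u v" using am(2) True by blast
      ultimately show ?thesis unfolding q_def by simp
    next
      case False
      hence "R3 u v = (if r u v then one A else w0)" using F1 unfolding R3_def by auto
      thus ?thesis using oo w0 by simp
    qed
  qed
  have M1a: "\<forall>a\<in>fst M1. \<forall>b\<in>fst M1. snd M1 a b \<in> carrier A"
    and M1r: "\<forall>a\<in>fst M1. ul_le A (one A) (snd M1 a a)"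
    using M1 unfolding K3_def a_structure_def by auto
  have M2a: "\<forall>a\<in>fst M2. \<forall>b\<in>fst M2. snd M2 a b \<in> carrier A"
    and M2r: "\<forall>a\<in>fst M2. ul_le A (one A) (snd M2 a a)"
    using M2 unfolding K3_def a_structure_def by auto
  have K: "M3 \<in> K3 A"
  proof -
    have c1: "snd M1 a b \<in> carrier A" if "a \<in> S" "b \<in> S" for a b
      using M1a that unfolding S_def by blast
    have c2: "snd M2 (h a) (h b) \<in> carrier A" if "a \<in> T" "b \<in> T" for a b
      using M2a hT(1)[OF that(1)] hT(1)[OF that(2)] by blast
    have "R3 a b \<in> carrier A" if "a \<in> S \<union> T" "b \<in> S \<union> T" for a b
    proof -
      consider "a \<in> S \<and> b \<in> S" | "\<not>(a \<in> S \<and> b \<in> S)" "a \<in> T \<and> b \<in> T"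
        | "\<not>(a \<in> S \<and> b \<in> S)" "\<not>(a \<in> T \<and> b \<in> T)" by blast
      then show ?thesis
      proof cases
        case 1 then show ?thesis unfolding R3_def using c1 by simp
      next
        case 2 then show ?thesis unfolding R3_def using c2 by auto
      next
        case 3 then show ?thesis unfolding R3_def using oc w0(1) by auto
      qed
    qed
    hence s1: "a_structure A M3" unfolding a_structure_def M3_def by simp
    have s2: "finite (fst M3)" unfolding M3_def S_def T_def using fin1 fin2 by simp
    have s3: "\<forall>a\<in>fst M3. ul_le A (one A) (snd M3 a a)"
    proof
      fix a assume a: "a \<in> fst M3"
      show "ul_le A (one A) (snd M3 a a)"
      proof (cases "a \<in> S")
        case True
        hence "snd M3 a a = snd M1 a a" unfolding M3_def R3_def by simp
        thus ?thesis using M1r True unfolding S_def by simp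
      next
        case False
        hence aT: "a \<in> T" using a unfolding M3_def by simp
        hence "snd M3 a a = snd M2 (h a) (h a)" using False unfolding M3_def R3_def by simp
        thus ?thesis using M2r hT(1)[OF aT] by simp
      qed
    qed
    have s4: "\<forall>a\<in>fst M3. \<forall>b\<in>fst M3. \<forall>c\<in>fst M3.
        ul_le A (one A) (snd M3 a b) \<longrightarrow> ul_le A (one A) (snd M3 b c) \<longrightarrow>
        ul_le A (one A) (snd M3 a c)"
    proof (intro ballI impI)
      fix a b c assume abc: "a \<in> fst M3" "b \<in> fst M3" "c \<in> fst M3"
        and h1: "ul_le A (one A) (snd M3 a b)" and h2: "ul_le A (one A) (snd M3 b c)"
      have abc': "a \<in> S \<union> T" "b \<in> S \<union> T" "c \<in> S \<union> T" using abc unfolding M3_def by simp_all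
      have "r a b" using h1 iff[OF abc'(1,2)] unfolding M3_def by simp
      moreover have "r b c" using h2 iff[OF abc'(2,3)] unfolding M3_def by simp
      ultimately have "r a c" using am(3)[OF abc'] by blast
      thus "ul_le A (one A) (snd M3 a c)" using iff[OF abc'(1,3)] unfolding M3_def by simp
    qed
    have s5: "\<forall>a\<in>fst M3. \<forall>b\<in>fst M3.
        ul_le A (one A) (snd M3 a b) \<longrightarrow> ul_le A (one A) (snd M3 b a) \<longrightarrow> a = b"
    proof (intro ballI impI)
      fix a b assume ab: "a \<in> fst M3" "b \<in> fst M3"
        and h1: "ul_le A (one A) (snd M3 a b)" and h2: "ul_le A (one A) (snd M3 b a)"
      have ab': "a \<in> S \<union> T" "b \<in> S \<union> T" using ab unfolding M3_def by simp_all
      have "r a b" using h1 iff[OF ab'(1,2)] unfolding M3_def by simp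
      moreover have "r b a" using h2 iff[OF ab'(2,1)] unfolding M3_def by simp
      ultimately show "a = b" using am(4)[OF ab'] by blast
    qed
    show ?thesis unfolding K3_def using s1 s2 s3 s4 s5 by blast
  qed
  have f1: "embedding id M1 M3" unfolding embedding_def M3_def R3_def S_def by simp
  have f2: "embedding g M2 M3"
    unfolding embedding_def
  proof (intro conjI ballI)
    show "inj_on g (fst M2)" by (rule injg)
    show "g ` fst M2 \<subseteq> fst M3" unfolding M3_def T_def by auto
    fix a b assume ab: "a \<in> fst M2" "b \<in> fst M2"
    show "snd M3 (g a) (g b) = snd M2 a b"
    proof (cases "g a \<in> S \<and> g b \<in> S")
      case True
      hence "g a \<in> S \<inter> T" "g b \<in> S \<inter> T" using ab unfolding T_def by auto
      thus ?thesis using True valST[of "g a" "g b"] hg ab unfolding M3_def R3_def by simp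
    next
      case False
      moreover have "g a \<in> T" "g b \<in> T" using ab unfolding T_def by auto
      ultimately have "snd M3 (g a) (g b) = snd M2 (h (g a)) (h (g b))" unfolding M3_def R3_def by auto
      thus ?thesis using hg ab by simp
    qed
  qed
  have agree: "\<forall>a\<in>fst M0. id (e1 a) = g (e2 a)" using ge2 by simp
  show ?thesis using K f1 f2 agree by blast
qed


lemma iso_emb: "isomorphism f M N \<Longrightarrow> embedding f M N" unfolding isomorphism_def by simp

lemma code_iso:
  fixes N1 N2 :: "'a strc"
  assumes f1: "finite (fst N1)" and f2: "finite (fst N2)"
    and eq: "map (\<lambda>a. map (snd N1 a) (sorted_list_of_set (fst N1))) (sorted_list_of_set (fst N1)) =
             map (\<lambda>a. map (snd N2 a) (sorted_list_of_set (fst N2))) (sorted_list_of_set (fst N2))"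
  shows "isomorphic N1 N2"
proof -
  define l1 where "l1 = sorted_list_of_set (fst N1)"
  define l2 where "l2 = sorted_list_of_set (fst N2)"
  have d1: "distinct l1" and s1: "set l1 = fst N1" using f1 unfolding l1_def by auto
  have d2: "distinct l2" and s2: "set l2 = fst N2" using f2 unfolding l2_def by auto
  have eq': "map (\<lambda>a. map (snd N1 a) l1) l1 = map (\<lambda>a. map (snd N2 a) l2) l2"
    using eq unfolding l1_def l2_def .
  have len: "length l1 = length l2" using arg_cong[OF eq', of length] by simp
  define f where "f a = the (map_of (zip l1 l2) a)" for a
  have fi: "f (l1 ! i) = l2 ! i" if "i < length l1" for i
    unfolding f_def using map_of_zip_nth[OF len d1] that len by simp
  have vals: "snd N2 (l2 ! i) (l2 ! j) = snd N1 (l1 ! i) (l1 ! j)" if "i < length l1" "j < length l1" for i j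
  proof -
    have "map (\<lambda>a. map (snd N1 a) l1) l1 ! i ! j = map (\<lambda>a. map (snd N2 a) l2) l2 ! i ! j"
      using eq' by simp
    thus ?thesis using that len by simp
  qed
  have "isomorphism f N1 N2" unfolding isomorphism_def embedding_def
  proof (intro conjI ballI)
    show "inj_on f (fst N1)"
    proof (rule inj_onI)
      fix a b assume "a \<in> fst N1" "b \<in> fst N1" "f a = f b"
      then obtain i j where ij: "i < length l1" "j < length l1" "a = l1 ! i" "b = l1 ! j" "f a = f b"
        using s1 by (metis in_set_conv_nth)
      hence "l2 ! i = l2 ! j" using fi by simp
      hence "i = j" using d2 ij len by (simp add: nth_eq_iff_index_eq)
      thus "a = b" using ij by simp
    qed
    show fim: "f ` fst N1 = fst N2"
    proof
      show "f ` fst N1 \<subseteq> fst N2"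
      proof
        fix x assume "x \<in> f ` fst N1"
        then obtain a where "a \<in> fst N1" "x = f a" by blast
        then obtain i where "i < length l1" "a = l1 ! i" using s1 by (metis in_set_conv_nth)
        thus "x \<in> fst N2" using fi \<open>x = f a\<close> s2 len by (metis nth_mem)
      qed
    next
      show "fst N2 \<subseteq> f ` fst N1"
      proof
        fix x assume "x \<in> fst N2"
        then obtain i where "i < length l2" "x = l2 ! i" using s2 by (metis in_set_conv_nth)
        hence "x = f (l1 ! i)" "l1 ! i \<in> fst N1" using fi len s1 by auto
        thus "x \<in> f ` fst N1" by blast
      qed
    qed
    thus "f ` fst N1 \<subseteq> fst N2" by simp
    fix a b assume "a \<in> fst N1" "b \<in> fst N1"
    then obtain i j where ij: "i < length l1" "j < length l1" "a = l1 ! i" "b = l1 ! j"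
      using s1 by (metis in_set_conv_nth)
    show "snd N2 (f a) (f b) = snd N1 a b" using ij fi vals by simp
  qed
  thus ?thesis unfolding isomorphic_def by blast
qed


lemma code_lists:
  fixes N :: "'a strc"
  assumes fN: "finite (fst N)" and aS: "a_structure A N"
  shows "map (\<lambda>a. map (snd N a) (sorted_list_of_set (fst N))) (sorted_list_of_set (fst N)) \<in> lists (lists (carrier A))"
proof -
  have sN: "set (sorted_list_of_set (fst N)) = fst N" using fN by simp
  have aN: "\<forall>a\<in>fst N. \<forall>b\<in>fst N. snd N a b \<in> carrier A" using aS unfolding a_structure_def by blast
  have row: "map (snd N a) (sorted_list_of_set (fst N)) \<in> lists (carrier A)" if a: "a \<in> fst N" for a
  proof (rule in_listsI, intro ballI)
    fix e assume "e \<in> set (map (snd N a) (sorted_list_of_set (fst N)))"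
    hence "e \<in> snd N a ` fst N" by (simp only: set_map sN)
    then obtain b where "b \<in> fst N" "e = snd N a b" by blast
    thus "e \<in> carrier A" using aN a by blast
  qed
  show ?thesis
  proof (rule in_listsI, intro ballI)
    fix r assume "r \<in> set (map (\<lambda>a. map (snd N a) (sorted_list_of_set (fst N))) (sorted_list_of_set (fst N)))"
    hence "r \<in> (\<lambda>a. map (snd N a) (sorted_list_of_set (fst N))) ` fst N" by (simp only: set_map sN)
    then obtain a where "a \<in> fst N" "r = map (snd N a) (sorted_list_of_set (fst N))" by blast
    thus "r \<in> lists (carrier A)" using row by simp
  qed
qed

theorem proposition4:
  fixes A :: "'a ul_alg" and R :: "'a strc set"
  assumes "ul_chain A" and "countable (carrier A)"
    and "iso_representatives (K3 A) R"
  shows "fraisse_class A R"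
proof -
  have A: "ul_algebra A" using assms(1) unfolding ul_chain_def by simp
  have RK: "R \<subseteq> K3 A" and rep: "\<forall>M\<in>K3 A. \<exists>N\<in>R. isomorphic M N"
    and uniq: "\<forall>N1\<in>R. \<forall>N2\<in>R. isomorphic N1 N2 \<longrightarrow> N1 = N2"
    using assms(3) unfolding iso_representatives_def by auto
  have fin: "\<forall>M\<in>R. a_structure A M \<and> finite (fst M)" using RK unfolding K3_def by auto
  define code :: "'a strc \<Rightarrow> 'a list list" where
    "code N = map (\<lambda>a. map (snd N a) (sorted_list_of_set (fst N))) (sorted_list_of_set (fst N))" for N
  have cnt: "countable R"
  proof (rule countable_image_inj_on)
    have "code ` R \<subseteq> lists (lists (carrier A))"
    proof
      fix x assume "x \<in> code ` R"
      then obtain N where N: "N \<in> R" "x = code N" by blast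
      have "finite (fst N)" "a_structure A N" using fin N by auto
      thus "x \<in> lists (lists (carrier A))" unfolding N(2) code_def by (rule code_lists)
    qed
    thus "countable (code ` R)" by (rule countable_subset[OF _ countable_lists[OF countable_lists[OF assms(2)]]])
    show "inj_on code R"
    proof (rule inj_onI)
      fix N1 N2 assume N12: "N1 \<in> R" "N2 \<in> R" "code N1 = code N2"
      have ff: "finite (fst N1)" "finite (fst N2)" using fin N12 by auto
      have eqm: "map (\<lambda>a. map (snd N1 a) (sorted_list_of_set (fst N1))) (sorted_list_of_set (fst N1)) =
             map (\<lambda>a. map (snd N2 a) (sorted_list_of_set (fst N2))) (sorted_list_of_set (fst N2))"
        using N12(3) unfolding code_def .
      have "isomorphic N1 N2" using code_iso[of N1 N2, OF ff eqm] .
      thus "N1 = N2" using uniq \<open>N1 \<in> R\<close> \<open>N2 \<in> R\<close> by blast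
    qed
  qed
  have her: "hereditary R" unfolding hereditary_def
  proof (intro ballI allI impI)
    fix M N assume M: "M \<in> R" and sub: "substructure N M"
    have MK: "M \<in> K3 A" using M RK by blast
    have ss: "fst N \<subseteq> fst M" and sv: "\<forall>a\<in>fst N. \<forall>b\<in>fst N. snd N a b = snd M a b"
      using sub unfolding substructure_def by auto
    have K: "a_structure A M" "finite (fst M)" "\<forall>a\<in>fst M. ul_le A (one A) (snd M a a)"
      "\<forall>a\<in>fst M. \<forall>b\<in>fst M. \<forall>c\<in>fst M.
        ul_le A (one A) (snd M a b) \<longrightarrow> ul_le A (one A) (snd M b c) \<longrightarrow>
        ul_le A (one A) (snd M a c)"
      "\<forall>a\<in>fst M. \<forall>b\<in>fst M.
        ul_le A (one A) (snd M a b) \<longrightarrow> ul_le A (one A) (snd M b a) \<longrightarrow> a = b"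
      using MK unfolding K3_def mem_Collect_eq by blast+
    have t1: "a_structure A N" unfolding a_structure_def
    proof (intro ballI)
      fix a b assume "a \<in> fst N" "b \<in> fst N"
      moreover hence "a \<in> fst M" "b \<in> fst M" using ss by auto
      ultimately show "snd N a b \<in> carrier A" using K(1) sv unfolding a_structure_def by simp
    qed
    have t2: "finite (fst N)" using K(2) ss finite_subset by blast
    have t3: "\<forall>a\<in>fst N. ul_le A (one A) (snd N a a)"
    proof
      fix a assume a: "a \<in> fst N"
      hence "a \<in> fst M" using ss by blast
      hence "ul_le A (one A) (snd M a a)" using K(3) by blast
      thus "ul_le A (one A) (snd N a a)" using sv a by metis
    qed
    have t4: "\<forall>a\<in>fst N. \<forall>b\<in>fst N. \<forall>c\<in>fst N.
        ul_le A (one A) (snd N a b) \<longrightarrow> ul_le A (one A) (snd N b c) \<longrightarrow>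
        ul_le A (one A) (snd N a c)"
    proof (intro ballI impI)
      fix a b c assume abc: "a \<in> fst N" "b \<in> fst N" "c \<in> fst N"
        and h: "ul_le A (one A) (snd N a b)" "ul_le A (one A) (snd N b c)"
      have m: "a \<in> fst M" "b \<in> fst M" "c \<in> fst M" using abc ss by auto
      have e: "snd N a b = snd M a b" "snd N b c = snd M b c" "snd N a c = snd M a c"
        using sv abc by metis+
      have "ul_le A (one A) (snd M a c)" using K(4) m h e by metis
      thus "ul_le A (one A) (snd N a c)" using e by metis
    qed
    have t5: "\<forall>a\<in>fst N. \<forall>b\<in>fst N.
        ul_le A (one A) (snd N a b) \<longrightarrow> ul_le A (one A) (snd N b a) \<longrightarrow> a = b"
    proof (intro ballI impI)
      fix a b assume ab: "a \<in> fst N" "b \<in> fst N"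
        and h: "ul_le A (one A) (snd N a b)" "ul_le A (one A) (snd N b a)"
      have m: "a \<in> fst M" "b \<in> fst M" using ab ss by auto
      have e: "snd N a b = snd M a b" "snd N b a = snd M b a" using sv ab by metis+
      show "a = b" using K(5) m h e by metis
    qed
    have "N \<in> K3 A" unfolding K3_def using t1 t2 t3 t4 t5 by blast
    thus "\<exists>N'\<in>R. isomorphic N N'" using rep by blast
  qed
  have am: "amalgamation R" unfolding amalgamation_def
  proof (intro ballI allI impI)
    fix M0 M1 M2 e1 e2 assume M: "M0 \<in> R" "M1 \<in> R" "M2 \<in> R"
      and e: "embedding e1 M0 M1" "embedding e2 M0 M2"
    obtain M3 f1 f2 where M3: "M3 \<in> K3 A" "embedding f1 M1 M3" "embedding f2 M2 M3"
      "\<forall>a\<in>fst M0. f1 (e1 a) = f2 (e2 a)"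
      using amalg_K3[OF A _ _ _ e] M RK by blast
    obtain N \<phi> where N: "N \<in> R" "isomorphism \<phi> M3 N"
      using rep M3(1) unfolding isomorphic_def by blast
    have "embedding (\<phi> \<circ> f1) M1 N" "embedding (\<phi> \<circ> f2) M2 N"
      using embedding_comp iso_emb M3 N by blast+
    moreover have "\<forall>a\<in>fst M0. (\<phi> \<circ> f1) (e1 a) = (\<phi> \<circ> f2) (e2 a)" using M3(4) by simp
    ultimately show "\<exists>M3\<in>R. \<exists>f1 f2. embedding f1 M1 M3 \<and> embedding f2 M2 M3 \<and>
        (\<forall>a\<in>fst M0. f1 (e1 a) = f2 (e2 a))" using N(1) by blast
  qed
  have jep: "joint_embedding R" unfolding joint_embedding_def
  proof (intro ballI)
    fix M1 M2 assume M: "M1 \<in> R" "M2 \<in> R"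
    define E :: "'a strc" where "E = ({}, \<lambda>_ _. one A)"
    have "E \<in> K3 A" unfolding E_def K3_def a_structure_def by simp
    then obtain M0 \<phi> where M0: "M0 \<in> R" "isomorphism \<phi> E M0"
      using rep unfolding isomorphic_def by blast
    have e0: "fst M0 = {}" using M0(2) unfolding isomorphism_def E_def by simp
    have "embedding id M0 M1" "embedding id M0 M2" unfolding embedding_def using e0 by auto
    thus "\<exists>M3\<in>R. \<exists>f1 f2. embedding f1 M1 M3 \<and> embedding f2 M2 M3"
      using am M M0(1) unfolding amalgamation_def by blast
  qed
  show ?thesis unfolding fraisse_class_def using cnt fin her jep am by blast
qed

end
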